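(* Let $d\ge2$, $q\ge2$, let $p\in\mathbb{Z}/q\mathbb{Z}$ with $\gcd(p,q)=1$ (take the representative $1\le p\le q-1$), and let $p^*$ be the inverse of $p$ in $\mathbb{Z}/q\mathbb{Z}$. Let $t=(a_0,a_1,\dots,a_{q-1})\in\mathbb{T}$ (in $q$-tuple notation) have $\sigma_d$-orbit $\mathcal{O}$ of size $q$. Then $t$ is the least element of $\mathcal{O}$ and $\mathcal{O}$ is $\sigma_d$-rotational with rotation number $p/q$ if and only if $$a_0\le a_{p^*}\le a_{2p^*}\le\dots\le a_{-(p+1)p^*}<a_{-pp^*}\le\dots\le a_{(q-1)p^*},$$ i.e. $a_{kp^*}\le a_{(k+1)p^*}$ for all $0\le k\le q-2$, with strict inequality for $k=q-p-1$.
   Context: $\mathbb{T}=\mathbb{R}/\mathbb{Z}$, totally ordered by representatives in $[0,1)$; $\sigma_d(t)=dt$. An orbit $\mathcal{O}=\{t_0<\dots<t_{q-1}\}$ (indices in $\mathbb{Z}/q\mathbb{Z}$) is $\sigma_d$-rotational with rotation number $p/q$ if $\sigma_d(t_i)=t_{i+p}$ for all $i$. $q$-tuple notation: $(a_0,\dots,a_{q-1})$ with $a_i\in\{0,\dots,d-1\}$ denotes the point with base-$d$ expansion $0.\overline{a_0a_1\dots a_{q-1}}$; digit indices are read in $\mathbb{Z}/q\mathbb{Z}$. *)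

theory Defs
  imports Complex_Main
begin

text \<open>The circle T = R/Z is represented by reals in [0,1), ordered as reals.\<close>

definition sigma :: "nat \<Rightarrow> real \<Rightarrow> real" where
  "sigma d x = frac (real d * x)"

definition orbit :: "nat \<Rightarrow> real \<Rightarrow> real set" where
  "orbit d x = {((sigma d) ^^ n) x | n. True}"

text \<open>The point with periodic base-d expansion 0.(a_0 a_1 ... a_{q-1}) repeated,
  taken modulo 1.\<close>
definition tuple_point :: "nat \<Rightarrow> nat \<Rightarrow> (nat \<Rightarrow> nat) \<Rightarrow> real" where
  "tuple_point d q a =
     frac ((\<Sum>i<q. real (a i) * real d ^ (q - 1 - i)) / (real d ^ q - 1))"

definition rotational :: "nat \<Rightarrow> real set \<Rightarrow> nat \<Rightarrow> nat \<Rightarrow> bool" where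
  "rotational d Orb p q \<longleftrightarrow>
     (\<exists>e :: nat \<Rightarrow> real. strict_mono_on {..<q} e \<and> e ` {..<q} = Orb \<and>
        (\<forall>i<q. sigma d (e i) = e ((i + p) mod q)))"

end

theory Submission imports Defs begin



definition NN :: "nat \<Rightarrow> nat \<Rightarrow> (nat \<Rightarrow> nat) \<Rightarrow> nat \<Rightarrow> nat" where
  "NN d q a j = (\<Sum>i<q. a ((j+i) mod q) * d^(q-1-i))"

definition xx :: "nat \<Rightarrow> nat \<Rightarrow> (nat \<Rightarrow> nat) \<Rightarrow> nat \<Rightarrow> real" where
  "xx d q a j = frac (real (NN d q a j) / real (d^q - 1))"

lemma NN_mod: "j mod q = j' mod q \<Longrightarrow> NN d q a j = NN d q a j'"
  unfolding NN_def by (metis mod_add_left_eq)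

lemma xx_mod: "j mod q = j' mod q \<Longrightarrow> xx d q a j = xx d q a j'"
  unfolding xx_def using NN_mod by metis

lemma NN_rec:
  assumes "q \<ge> 1" "d \<ge> 1"
  shows "d * NN d q a j = a (j mod q) * (d^q - 1) + NN d q a (Suc j)"
proof -
  obtain r where q: "q = Suc r" using assms by (cases q) auto
  let ?c = "\<lambda>i. a ((j+i) mod q)"
  have "d * NN d q a j = (\<Sum>i<Suc r. ?c i * d^(Suc r - i))"
    unfolding NN_def q sum_distrib_left
    by (rule sum.cong) (auto simp: Suc_diff_le power_Suc)
  also have "\<dots> = ?c 0 * d^q + (\<Sum>i<r. ?c (Suc i) * d^(r - i))"
    by (subst sum.lessThan_Suc_shift) (simp add: q)
  finally have 1: "d * NN d q a j = ?c 0 * d^q + (\<Sum>i<r. ?c (Suc i) * d^(r - i))" .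
  have "NN d q a (Suc j) = (\<Sum>i<r. ?c (Suc i) * d^(r - i)) + a ((Suc j + r) mod q)"
    unfolding NN_def q by simp
  moreover have "(Suc j + r) mod q = j mod q"
  proof -
    have "Suc j + r = j + q" using q by simp
    then show ?thesis by (metis mod_add_self2)
  qed
  ultimately have 2: "NN d q a (Suc j) = (\<Sum>i<r. ?c (Suc i) * d^(r - i)) + ?c 0" by simp
  have "d^q \<ge> 1" using assms by simp
  then have "?c 0 * (d^q - 1) + ?c 0 = ?c 0 * d^q"
    by (simp add: diff_mult_distrib2)
  then show ?thesis using 1 2 by simp
qed

lemma sum_digits_bound:
  assumes "\<forall>i<n. c i < (d::nat)"
  shows "(\<Sum>i<n. c i * d^(n-1-i)) < d^n"
  using assms
proof (induction n arbitrary: c)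
  case 0 then show ?case by simp
next
  case (Suc n)
  have IH: "(\<Sum>i<n. c (Suc i) * d^(n-1-i)) < d^n" using Suc by auto
  have "(\<Sum>i<Suc n. c i * d^(Suc n-1-i)) = c 0 * d^n + (\<Sum>i<n. c (Suc i) * d^(n-1-i))"
    by (subst sum.lessThan_Suc_shift) simp
  also have "\<dots> < c 0 * d^n + d^n" using IH by simp
  also have "\<dots> = (c 0 + 1) * d^n" by simp
  also have "\<dots> \<le> d * d^n" using Suc.prems by (intro mult_right_mono) auto
  finally show ?case by simp
qed

lemma NN_le:
  assumes "\<forall>i<q. a i < d" "q \<ge> 1"
  shows "NN d q a j \<le> d^q - 1"
proof -
  have "\<forall>i<q. a ((j+i) mod q) < d" using assms by auto
  from sum_digits_bound[OF this] show ?thesis unfolding NN_def by simp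
qed




lemma tp_xx:
  assumes "d \<ge> 2"
  shows "tuple_point d q a = xx d q a 0"
proof -
  have "(\<Sum>i<q. real (a i) * real d ^ (q - 1 - i)) = real (NN d q a 0)"
    unfolding NN_def by (simp add: of_nat_sum)
  moreover have "real d ^ q - 1 = real (d^q - 1)"
    using assms by (simp add: of_nat_diff)
  ultimately show ?thesis unfolding tuple_point_def xx_def by simp
qed

lemma div_rec: "(M::real) > 0 \<Longrightarrow> D * N = A * M + N' \<Longrightarrow> D * (N / M) = A + N' / M"
  by (simp add: field_simps)

lemma sigma_xx:
  assumes "d \<ge> 2" "q \<ge> 1"
  shows "sigma d (xx d q a j) = xx d q a (Suc j)"
proof -
  let ?M = "d^q - 1"
  have Mpos: "?M > 0"
  proof -
    have "d^q \<ge> d^1" using assms by (intro power_increasing) auto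
    then show ?thesis using assms by simp
  qed
  let ?y = "real (NN d q a j) / real ?M"
  have rec: "real d * ?y = real (a (j mod q)) + real (NN d q a (Suc j)) / real ?M"
  proof -
    have "real (d * NN d q a j) = real (a (j mod q) * ?M + NN d q a (Suc j))"
      using NN_rec[of q d a j] assms by simp
    then have "real d * real (NN d q a j) = real (a (j mod q)) * real ?M + real (NN d q a (Suc j))"
      by simp
    moreover have "real ?M > 0" using Mpos by (simp only: of_nat_0_less_iff)
    ultimately show ?thesis by (rule div_rec[rotated])
  qed
  have "sigma d (xx d q a j) = frac (real d * frac ?y)"
    unfolding sigma_def xx_def by simp
  also have "real d * frac ?y = real d * ?y - of_int (int d * \<lfloor>?y\<rfloor>)"
    by (simp add: frac_def algebra_simps)
  also have "frac (real d * ?y - of_int (int d * \<lfloor>?y\<rfloor>)) = frac (real d * ?y)"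
    by (metis diff_conv_add_uminus frac_add_of_int_right of_int_minus)
  also have "\<dots> = frac (real (NN d q a (Suc j)) / real ?M)"
    unfolding rec by (metis add.commute frac_add_of_int_right of_int_of_nat_eq)
  finally show ?thesis unfolding xx_def by simp
qed

lemma iter_xx:
  assumes "d \<ge> 2" "q \<ge> 1"
  shows "(sigma d ^^ n) (xx d q a 0) = xx d q a n"
  by (induction n) (auto simp: sigma_xx[OF assms])

lemma orbit_xx:
  assumes "d \<ge> 2" "q \<ge> 1"
  shows "orbit d (xx d q a 0) = xx d q a ` {..<q}"
proof -
  have "orbit d (xx d q a 0) = {xx d q a n | n. True}"
    unfolding orbit_def iter_xx[OF assms] by simp
  also have "\<dots> = xx d q a ` {..<q}"
  proof safe
    fix n show "xx d q a n \<in> xx d q a ` {..<q}"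
      using xx_mod[of "n mod q" q n d a] assms by (intro image_eqI[of _ _ "n mod q"]) auto
  qed auto
  finally show ?thesis .
qed

lemma NN_lt:
  assumes "d \<ge> 2" "q \<ge> 2" "\<forall>i<q. a i < d"
    and card: "card (orbit d (xx d q a 0)) = q"
  shows "NN d q a j < d^q - 1"
proof (rule ccontr)
  let ?M = "d^q - 1"
  have Mpos: "?M > 0"
  proof -
    have "d^q \<ge> d^1" using assms by (intro power_increasing) auto
    then show ?thesis using assms by simp
  qed
  assume "\<not> ?thesis"
  then have j: "NN d q a j = ?M" using NN_le[of q a d j] assms by simp
  have step: "NN d q a (Suc i) = ?M" if "NN d q a i = ?M" for i
  proof -
    have e: "d * ?M = a (i mod q) * ?M + NN d q a (Suc i)"
      using NN_rec[of q d a i] assms that by simp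
    have le: "NN d q a (Suc i) \<le> ?M" using NN_le[of q a d] assms by simp
    have alt: "a (i mod q) < d" using assms by simp
    then have "d * ?M \<le> (a (i mod q) + 1) * ?M" using e le by simp
    then have "d \<le> a (i mod q) + 1" using Mpos by (metis mult_le_cancel2)
    then have "d = a (i mod q) + 1" using alt by simp
    then show ?thesis using e by simp
  qed
  have all: "NN d q a (j + n) = ?M" for n
    by (induction n) (use j step in auto)
  have allk: "NN d q a k = ?M" for k
  proof -
    have "NN d q a k = NN d q a (j + (q - j mod q + k))"
    proof (rule NN_mod)
      have "j + (q - j mod q + k) = (j div q) * q + q + k"
      proof -
        have m: "j mod q < q" using assms by simp
        have "j = j div q * q + j mod q" by simp
        then show ?thesis using m by linarith
      qed
      then have e: "j + (q - j mod q + k) = k + (j div q + 1) * q" by (simp add: algebra_simps)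
      show "k mod q = (j + (q - j mod q + k)) mod q" by (simp only: e mod_mult_self1)
    qed
    then show ?thesis using all by simp
  qed
  have x0: "xx d q a k = 0" for k
  proof -
    have "real ?M \<noteq> 0" using Mpos by (simp only: of_nat_0_less_iff not_gr_zero of_nat_eq_0_iff)
    then show ?thesis unfolding xx_def allk by simp
  qed
  have "xx d q a ` {..<q} = {0}"
    using assms by (auto simp: x0 intro!: image_eqI[of _ _ 0])
  then have "card (orbit d (xx d q a 0)) = 1" using orbit_xx[of d q a] assms by simp
  then show False using card assms by simp
qed




lemma consec_mono:
  fixes f :: "nat \<Rightarrow> 'a::order"
  assumes "\<forall>k. Suc k < q \<longrightarrow> f k < f (Suc k)"
  shows "i < j \<Longrightarrow> j < q \<Longrightarrow> f i < f j"
proof (induction j)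
  case 0 then show ?case by simp
next
  case (Suc j)
  show ?case
  proof (cases "i = j")
    case True then show ?thesis using assms Suc by simp
  next
    case False
    then have "f i < f j" using Suc by simp
    also have "f j < f (Suc j)" using assms Suc by simp
    finally show ?thesis .
  qed
qed

lemma idx_lemma:
  fixes k p q :: nat
  assumes "k < q" "1 \<le> p" "p \<le> q - 1" "(k + p) mod q = q - 1"
  shows "k = q - p - 1"
proof (cases "k + p < q")
  case True
  then have "(k+p) mod q = k + p" by simp
  then show ?thesis using assms by simp
next
  case False
  then have "(k+p) mod q = (k + p - q) mod q" by (simp add: le_mod_geq)
  also have "\<dots> = k + p - q" using assms by (intro mod_less) auto
  finally show ?thesis using assms False by simp
qed

lemma mod_fact:
  fixes k p q ps :: nat
  assumes "(p * ps) mod q = 1"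
  shows "Suc ((k*ps) mod q) mod q = (((k+p) mod q)*ps mod q) mod q"
proof -
  have "(((k+p) mod q)*ps mod q) mod q = ((k+p)*ps) mod q" by (simp add: mod_mult_left_eq)
  also have "\<dots> = (k*ps + p*ps) mod q" by (simp add: algebra_simps)
  also have "\<dots> = (k*ps + (p*ps) mod q) mod q" by (simp add: mod_add_right_eq)
  also have "\<dots> = Suc (k*ps) mod q" using assms by simp
  also have "\<dots> = Suc ((k*ps) mod q) mod q" by (simp add: mod_Suc_eq)
  finally show ?thesis by simp
qed

lemma mod_inv:
  fixes k p q ps :: nat
  assumes "(p * ps) mod q = 1" "k < q"
  shows "(k*ps*p) mod q = k"
proof -
  have "(k*ps*p) mod q = (k * (p*ps)) mod q"
    by (simp add: algebra_simps)
  also have "\<dots> = (k * ((p*ps) mod q)) mod q"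
    by (simp add: mod_mult_right_eq)
  finally show ?thesis using assms by simp
qed




lemma divlt: "(M::real) > 0 \<Longrightarrow> real u / M < real v / M \<longleftrightarrow> u < v"
  by (simp add: divide_less_cancel)

theorem corollary3p2:
  fixes d q p ps :: nat and a :: "nat \<Rightarrow> nat"
  assumes "d \<ge> 2" and "q \<ge> 2"
    and "1 \<le> p" and "p \<le> q - 1" and "coprime p q"
    and "ps < q" and "(p * ps) mod q = 1"
    and "\<forall>i<q. a i < d"
    and "card (orbit d (tuple_point d q a)) = q"
  shows "((\<forall>y\<in>orbit d (tuple_point d q a). tuple_point d q a \<le> y) \<and>
          rotational d (orbit d (tuple_point d q a)) p q)
     \<longleftrightarrow> ((\<forall>k. k \<le> q - 2 \<longrightarrow> a ((k * ps) mod q) \<le> a (((k + 1) * ps) mod q)) \<and>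
          a (((q - p - 1) * ps) mod q) < a (((q - p) * ps) mod q))"
proof -
  let ?t = "tuple_point d q a"
  let ?M = "d^q - 1"
  let ?x = "xx d q a"
  have tp: "?t = ?x 0" using tp_xx[OF assms(1)] .
  have q1: "q \<ge> 1" using assms by simp
  have orb: "orbit d ?t = ?x ` {..<q}" using orbit_xx[OF assms(1) q1] tp by simp
  have card': "card (orbit d (?x 0)) = q" using assms(9) tp by simp
  have Nlt: "NN d q a j < ?M" for j using NN_lt[OF assms(1,2,8) card'] .
  have Mpos: "?M > 0" using Nlt[of 0] by linarith
  have rMpos: "real ?M > 0" using Mpos by (simp only: of_nat_0_less_iff)
  have xval: "?x j = real (NN d q a j) / real ?M" for j
  proof -
    have "real (NN d q a j) < real ?M" using Nlt[of j] by (simp only: of_nat_less_iff)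
    then have "real (NN d q a j) / real ?M < 1" using rMpos by simp
    then show ?thesis unfolding xx_def by (intro frac_eq_id) simp
  qed
  have xlt: "?x j < ?x k \<longleftrightarrow> NN d q a j < NN d q a k" for j k
    unfolding xval using divlt[OF rMpos] .
  define E where "E k = NN d q a ((k*ps) mod q)" for k
  define b where "b k = a ((k*ps) mod q)" for k
  have Erec: "d * E k = b k * ?M + E ((k+p) mod q)" for k
  proof -
    have "d * E k = a ((k*ps) mod q mod q) * ?M + NN d q a (Suc ((k*ps) mod q))"
      unfolding E_def using NN_rec[of q d a "(k*ps) mod q"] q1 assms(1) by simp
    moreover have "NN d q a (Suc ((k*ps) mod q)) = E ((k+p) mod q)"
      unfolding E_def by (rule NN_mod[OF mod_fact[OF assms(7)]])
    ultimately show ?thesis unfolding b_def by simp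
  qed
  have Elt: "E k < ?M" for k unfolding E_def using Nlt .
  have bdiv: "b k = (d * E k) div ?M" for k
    unfolding Erec using Elt[of "(k+p) mod q"] Mpos by simp
  have bmono: "E k \<le> E k' \<Longrightarrow> b k \<le> b k'" for k k'
    unfolding bdiv by (intro div_le_mono mult_le_mono2)
  have Estrict: "b k < b k' \<Longrightarrow> E k < E k'" for k k'
    using bmono not_le by blast
  have rhs_eq: "((\<forall>k. k \<le> q - 2 \<longrightarrow> a ((k * ps) mod q) \<le> a (((k + 1) * ps) mod q)) \<and>
          a (((q - p - 1) * ps) mod q) < a (((q - p) * ps) mod q))
      \<longleftrightarrow> ((\<forall>k. k \<le> q - 2 \<longrightarrow> b k \<le> b (k+1)) \<and> b (q - p - 1) < b (q - p))"
    unfolding b_def by simp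
  let ?SM = "\<forall>k. Suc k < q \<longrightarrow> E k < E (Suc k)"
  have lhs_sm: "((\<forall>y\<in>orbit d ?t. ?t \<le> y) \<and> rotational d (orbit d ?t) p q) \<longleftrightarrow> ?SM"
  proof
    assume L: "(\<forall>y\<in>orbit d ?t. ?t \<le> y) \<and> rotational d (orbit d ?t) p q"
    then obtain e' where sm: "strict_mono_on {..<q} e'" and img: "e' ` {..<q} = orbit d ?t"
      and rot: "\<forall>i<q. sigma d (e' i) = e' ((i + p) mod q)"
      unfolding rotational_def by blast
    have "?x 0 \<in> orbit d ?t" using orb q1 by auto
    then obtain j0 where j0: "j0 < q" "e' j0 = ?x 0" using img by (metis imageE lessThan_iff)
    have "e' 0 \<in> orbit d ?t" using img q1 by auto
    then have le0: "?x 0 \<le> e' 0" using L tp by simp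
    have "j0 = 0"
    proof (rule ccontr)
      assume "j0 \<noteq> 0"
      then have "e' 0 < e' j0" using sm j0 by (intro strict_mono_onD[OF sm]) auto
      then show False using le0 j0 by simp
    qed
    then have e0: "e' 0 = ?x 0" using j0 by simp
    have iter: "e' ((n*p) mod q) = ?x n" for n
    proof (induction n)
      case 0 then show ?case using e0 by simp
    next
      case (Suc n)
      have "(Suc n * p) mod q = ((n*p) mod q + p) mod q" 
      proof -
        have "Suc n * p = n*p + p" by simp
        then show ?thesis by (simp only: mod_add_left_eq)
      qed
      then have "e' ((Suc n * p) mod q) = sigma d (e' ((n*p) mod q))"
        using rot q1 by simp
      also have "\<dots> = ?x (Suc n)" using Suc sigma_xx[OF assms(1) q1] by simp
      finally show ?case .
    qed
    have ek: "e' k = ?x ((k*ps) mod q)" if "k < q" for k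
    proof -
      have "e' k = e' ((k*ps*p) mod q)" using mod_inv[OF assms(7) that] by simp
      also have "\<dots> = ?x (k*ps)" using iter by simp
      also have "\<dots> = ?x ((k*ps) mod q)" by (rule xx_mod) simp
      finally show ?thesis .
    qed
    show ?SM
    proof (intro allI impI)
      fix k assume k: "Suc k < q"
      have "e' k < e' (Suc k)" using k by (intro strict_mono_onD[OF sm]) auto
      then show "E k < E (Suc k)" using ek k xlt unfolding E_def by simp
    qed
  next
    assume SM: ?SM
    have emono: "E i < E j" if "i < j" "j < q" for i j
      using consec_mono[OF SM] that .
    define e where "e k = ?x ((k*ps) mod q)" for k
    have ex: "e i < e j \<longleftrightarrow> E i < E j" for i j unfolding e_def E_def xlt ..
    have sme: "strict_mono_on {..<q} e"
      unfolding strict_mono_on_def using emono ex by auto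
    have imge: "e ` {..<q} = orbit d ?t"
      unfolding orb
    proof safe
      fix k assume "k < q" then show "e k \<in> ?x ` {..<q}" unfolding e_def using q1 by auto
    next
      fix j :: nat assume j: "j < q"
      have "((j*p) mod q * ps) mod q = (j*p*ps) mod q" by (simp add: mod_mult_left_eq)
      also have "\<dots> = j" using mod_inv[of p ps q j] assms(7) j by (simp add: algebra_simps)
      finally have "e ((j*p) mod q) = ?x j" unfolding e_def by simp
      moreover have "(j*p) mod q < q" using q1 by simp
      ultimately show "?x j \<in> e ` {..<q}" by (metis imageI lessThan_iff)
    qed
    have rote: "\<forall>i<q. sigma d (e i) = e ((i + p) mod q)"
    proof (intro allI impI)
      fix i assume "i < q"
      have "sigma d (e i) = ?x (Suc ((i*ps) mod q))" unfolding e_def using sigma_xx[OF assms(1) q1] by simp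
      also have "\<dots> = e ((i + p) mod q)" unfolding e_def by (rule xx_mod[OF mod_fact[OF assms(7)]])
      finally show "sigma d (e i) = e ((i + p) mod q)" .
    qed
    have te: "?t = e 0" unfolding tp e_def by simp
    have least: "\<forall>y\<in>orbit d ?t. ?t \<le> y"
    proof
      fix y assume "y \<in> orbit d ?t"
      then obtain k where k: "k < q" "y = e k" using imge by auto
      show "?t \<le> y"
      proof (cases "k = 0")
        case True then show ?thesis using k te by simp
      next
        case False then have "e 0 < e k" using k emono ex by simp
        then show ?thesis using k te by simp
      qed
    qed
    show "(\<forall>y\<in>orbit d ?t. ?t \<le> y) \<and> rotational d (orbit d ?t) p q"
      using least sme imge rote unfolding rotational_def by blast
  qed
  have sm_rhs: "?SM \<longleftrightarrow> ((\<forall>k. k \<le> q - 2 \<longrightarrow> b k \<le> b (k+1)) \<and> b (q - p - 1) < b (q - p))"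
  proof
    assume SM: ?SM
    have emono: "E i < E j" if "i < j" "j < q" for i j
      using consec_mono[OF SM] that .
    have A: "\<forall>k. k \<le> q - 2 \<longrightarrow> b k \<le> b (k+1)"
    proof (intro allI impI)
      fix k assume "k \<le> q - 2"
      then have "Suc k < q" using assms by simp
      then have "E k < E (Suc k)" using SM by simp
      then show "b k \<le> b (k+1)" using bmono by simp
    qed
    have B: "b (q - p - 1) < b (q - p)"
    proof (rule ccontr)
      assume "\<not> ?thesis"
      moreover have "b (q - p - 1) \<le> b (q - p)"
      proof -
        have h1: "q-p-1 \<le> q-2" using assms(2,3,4) by arith
        have h2: "q-p-1+1 = q-p" using assms(2,3,4) by arith
        show ?thesis using A[rule_format, OF h1] h2 by simp
      qed
      ultimately have eqb: "b (q - p - 1) = b (q - p)" by simp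
      have s1: "Suc (q - p - 1) = q - p" using assms(2,3,4) by arith
      have s2: "Suc (q - p - 1) < q" using assms(2,3,4) by arith
      have "E (q-p-1) < E (Suc (q-p-1))" using SM s2 by blast
      then have "E (q-p-1) < E (q-p)" by (simp only: s1)
      then have "d * E (q-p-1) < d * E (q-p)" using assms by simp
      moreover have e1: "d * E (q-p-1) = b (q-p) * ?M + E ((q-p-1+p) mod q)"
        using Erec[of "q-p-1"] unfolding eqb .
      moreover have e2: "d * E (q-p) = b (q-p) * ?M + E ((q-p+p) mod q)"
        using Erec[of "q-p"] .
      ultimately have "b (q-p) * ?M + E ((q-p-1+p) mod q) < b (q-p) * ?M + E ((q-p+p) mod q)"
        by (simp only:)
      then have lt: "E ((q-p-1+p) mod q) < E ((q-p+p) mod q)" by (simp only: add_less_cancel_left)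
      have m1: "(q-p-1+p) mod q = q - 1"
      proof -
        have "q-p-1+p = q - 1" using assms(2,3,4) by arith
        moreover have "q - 1 < q" using assms(2) by arith
        ultimately show ?thesis by (simp only: mod_less)
      qed
      have m2: "(q-p+p) mod q = 0"
      proof -
        have "q-p+p = q" using assms(2,3,4) by arith
        then show ?thesis by (simp only: mod_self)
      qed
      have "E (q-1) < E 0" using lt by (simp only: m1 m2)
      moreover have "E 0 < E (q-1)" using emono assms(2) by simp
      ultimately show False by simp
    qed
    show "(\<forall>k. k \<le> q - 2 \<longrightarrow> b k \<le> b (k+1)) \<and> b (q - p - 1) < b (q - p)" using A B by simp
  next
    assume R: "(\<forall>k. k \<le> q - 2 \<longrightarrow> b k \<le> b (k+1)) \<and> b (q - p - 1) < b (q - p)"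
    have base: "E k < E (Suc k)" if "k = q - p - 1" for k
    proof -
      have s1: "Suc k = q - p" using assms(2,3,4) that by arith
      have "b k < b (Suc k)" unfolding s1 using R[THEN conjunct2] that by simp
      then show ?thesis using Estrict by blast
    qed
    have claim: "\<forall>k. Suc k < q \<longrightarrow> (k + n*p) mod q = q - p - 1 \<longrightarrow> E k < E (Suc k)" for n
    proof (induction n)
      case 0
      show ?case
      proof (intro allI impI)
        fix k assume "Suc k < q" "(k + 0*p) mod q = q - p - 1"
        then have "k = q - p - 1" by simp
        then show "E k < E (Suc k)" using base by simp
      qed
    next
      case (Suc n)
      show ?case
      proof (intro allI impI)
        fix k assume k: "Suc k < q" and kn: "(k + Suc n*p) mod q = q - p - 1"
        show "E k < E (Suc k)"
        proof (cases "k = q - p - 1")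
          case True then show ?thesis using base by simp
        next
          case False
          have "b k \<le> b (Suc k)" using R k by simp
          show ?thesis
          proof (cases "b k < b (Suc k)")
            case True then show ?thesis using Estrict by simp
          next
            case nb: False
            then have beq: "b k = b (Suc k)" using \<open>b k \<le> b (Suc k)\<close> by simp
            define k' where "k' = (k + p) mod q"
            have "k' \<noteq> q - 1"
              using idx_lemma[of k q p] k False assms(3,4) unfolding k'_def by auto
            moreover have "k' < q" unfolding k'_def using q1 by simp
            ultimately have k'q: "Suc k' < q" by simp
            have sk: "(Suc k + p) mod q = Suc k'"
              unfolding k'_def using k'q by (simp add: mod_Suc k'_def)
            have "(k' + n*p) mod q = (k + p + n*p) mod q" unfolding k'_def by (simp add: mod_add_left_eq)
            also have "\<dots> = q - p - 1" using kn by (simp add: algebra_simps)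
            finally have "E k' < E (Suc k')" using Suc.IH k'q by simp
            then have "d * E k < d * E (Suc k)"
              unfolding Erec beq using sk k'_def by simp
            then show ?thesis by simp
          qed
        qed
      qed
    qed
    show ?SM
    proof (intro allI impI)
      fix k assume k: "Suc k < q"
      define m where "m = 2*q - p - 1 - k"
      have "(k + (m*ps)*p) mod q = (k + m * (p*ps)) mod q" by (simp add: algebra_simps)
      also have "\<dots> = (k + (m * (p*ps)) mod q) mod q" by (rule mod_add_right_eq[symmetric])
      also have "(m * (p*ps)) mod q = (m * ((p*ps) mod q)) mod q" by (rule mod_mult_right_eq[symmetric])
      also have "(m * ((p*ps) mod q)) = m" using assms(7) by simp
      also have "(k + m mod q) mod q = (k + m) mod q" by (rule mod_add_right_eq)
      also have "k + m = (q - p - 1) + q" unfolding m_def using assms(2,3,4) k by arith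
      also have "((q - p - 1) + q) mod q = q - p - 1"
      proof -
        have "q - p - 1 < q" using assms(2,3,4) by arith
        then show ?thesis by (simp only: mod_add_self2 mod_less)
      qed
      finally have "(k + (m*ps)*p) mod q = q - p - 1" .
      then show "E k < E (Suc k)" using claim[of "m*ps"] k by blast
    qed
  qed
  show ?thesis using lhs_sm sm_rhs rhs_eq by simp
qed


end
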